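(* Let $\mathcal{D}(\rho)=p_0\rho+p_1X\rho X+p_2Y\rho Y+p_3Z\rho Z$ and $\mathcal{E}(\rho)=q_0\rho+q_1X\rho X+q_2Y\rho Y+q_3Z\rho Z$ be two arbitrary single-qubit quantum Pauli channels, where $(p_i)$ and $(q_i)$ are probability vectors. The entanglement-assisted classical communication capacity of $\mathcal{D}$ and $\mathcal{E}$ over a quantum trajectory is $$C_{\text{E,Q}}=2+H(\alpha)+A_0\log_2A_0+\sum_{k=1}^3 A_k^+\log_2A_k^++\sum_{k=1}^3A_k^-\log_2A_k^-,$$ where $A_0=p_0q_0+p_1q_1+p_2q_2+p_3q_3$, $A_1^+=p_0q_1+p_1q_0$, $A_2^+=p_0q_2+p_2q_0$, $A_3^+=p_0q_3+p_3q_0$, $A_1^-=p_2q_3+p_3q_2$, $A_2^-=p_3q_1+p_1q_3$, $A_3^-=p_1q_2+p_2q_1$, $\alpha=A_0+A_1^++A_2^++A_3^+$, and $H(\alpha)=-\alpha\log_2\alpha-(1-\alpha)\log_2(1-\alpha)$ is the binary entropy.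
   Context: $X,Y,Z$ are the Pauli matrices, $\sigma_0=I,\sigma_1=X,\sigma_2=Y,\sigma_3=Z$, $|\pm\rangle=(|0\rangle\pm|1\rangle)/\sqrt2$, and $0\log_2 0=0$. For a Pauli channel $\mathcal{N}(\rho)=\sum_{i=0}^3 r_i\sigma_i\rho\sigma_i$, its entanglement-assisted classical capacity (superdense-coding capacity with a pre-shared EPR pair, equiprobable inputs) is defined as $C_E(\mathcal{N})=2+\sum_i r_i\log_2 r_i$. Quantum trajectory (quantum switch): with $D_i=\sqrt{p_i}\sigma_i$, $E_j=\sqrt{q_j}\sigma_j$, the channel acting on the data qubit $\rho$ and a control qubit $\omega=|+\rangle\langle+|$ is $\mathcal{S}_\omega(\mathcal{D},\mathcal{E})(\rho)=\sum_{i,j}W_{i,j}(\rho\otimes\omega)W_{i,j}^\dagger$ with $W_{i,j}=E_jD_i\otimes|0\rangle\langle0|+D_iE_j\otimes|1\rangle\langle1|$. Since each pair of Pauli matrices commutes or anticommutes, the output is of the form $p_{+}\,\mathcal{S}_{+}(\rho)\otimes|+\rangle\langle+|+p_{-}\,\mathcal{S}_{-}(\rho)\otimes|-\rangle\langle-|$, where the pairs $(i,j)$ with commuting $\sigma_i,\sigma_j$ contribute to the $|+\rangle$ branch and anticommuting pairs to the $|-\rangle$ branch, $p_\pm$ are the total weights of the branches and $\mathcal{S}_\pm$ are the normalized (Pauli) channels of each branch. Measuring the control in the basis $\{|+\rangle,|-\rangle\}$, the capacity over the quantum trajectory is defined as $C_{\text{E,Q}}=p_{+}C_E(\mathcal{S}_{+})+p_{-}C_E(\mathcal{S}_{-})$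 (a branch with zero probability contributes zero). *)

theory Defs
  imports "HOL-Analysis.Analysis"
begin

text \<open>Single-qubit operators are 2x2 complex matrices, type complex^2^2 (indices 0,1 of type 2).\<close>

type_synonym qop = "complex^2^2"

definition pauli :: "nat \<Rightarrow> qop" where
  "pauli k =
     (if k = 0 then mat 1
      else if k = 1 then (\<chi> r c. if r = c then 0 else 1)
      else if k = 2 then (\<chi> r c. if r = c then 0 else if r = 0 then - \<i> else \<i>)
      else if k = 3 then (\<chi> r c. if r \<noteq> c then 0 else if r = 0 then 1 else -1)
      else 0)"

definition cadj :: "qop \<Rightarrow> qop" where
  "cadj A = (\<chi> i j. cnj (A $ j $ i))"

definition pauli_commute :: "nat \<Rightarrow> nat \<Rightarrow> bool" where
  "pauli_commute i j \<longleftrightarrow> pauli i ** pauli j = pauli j ** pauli i"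

definition pauli_channel :: "(nat \<Rightarrow> real) \<Rightarrow> qop \<Rightarrow> qop" where
  "pauli_channel r \<rho> = (\<Sum>k<4. r k *\<^sub>R (pauli k ** \<rho> ** pauli k))"

definition is_pauli_coeffs :: "(nat \<Rightarrow> real) \<Rightarrow> (qop \<Rightarrow> qop) \<Rightarrow> bool" where
  "is_pauli_coeffs r N \<longleftrightarrow> (\<forall>k<4. 0 \<le> r k) \<and> (\<forall>k\<ge>4. r k = 0) \<and> (\<Sum>k<4. r k) = 1
      \<and> (\<forall>\<rho>. N \<rho> = pauli_channel r \<rho>)"

definition plogp :: "real \<Rightarrow> real" where
  "plogp x = (if x = 0 then 0 else x * log 2 x)"

definition C_E :: "(qop \<Rightarrow> qop) \<Rightarrow> real" where
  "C_E N = (let r = (THE r. is_pauli_coeffs r N) in 2 + (\<Sum>k<4. plogp (r k)))"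

text \<open>Unnormalised branch of the quantum switch output (b = True: commuting pairs, control
  branch |+>; b = False: anticommuting pairs, control branch |->). The Kraus operator
  contributing to the data part is E_j D_i = sqrt(p_i q_j) sigma_j sigma_i.\<close>
definition switch_branch :: "bool \<Rightarrow> (nat \<Rightarrow> real) \<Rightarrow> (nat \<Rightarrow> real) \<Rightarrow> qop \<Rightarrow> qop" where
  "switch_branch b p q \<rho> =
     (\<Sum>i<4. \<Sum>j<4. if pauli_commute i j = b then
        (let K = (sqrt (p i) * sqrt (q j)) *\<^sub>R (pauli j ** pauli i) in K ** \<rho> ** cadj K)
      else 0)"

definition branch_prob :: "bool \<Rightarrow> (nat \<Rightarrow> real) \<Rightarrow> (nat \<Rightarrow> real) \<Rightarrow> real" where
  "branch_prob b p q = (\<Sum>i<4. \<Sum>j<4. if pauli_commute i j = b then p i * q j else 0)"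

definition C_EQ :: "(nat \<Rightarrow> real) \<Rightarrow> (nat \<Rightarrow> real) \<Rightarrow> real" where
  "C_EQ p q = (\<Sum>b\<in>{True, False}.
      if branch_prob b p q = 0 then 0
      else branch_prob b p q * C_E (\<lambda>\<rho>. (1 / branch_prob b p q) *\<^sub>R switch_branch b p q \<rho>))"

definition bin_entropy :: "real \<Rightarrow> real" where
  "bin_entropy a = - plogp a - plogp (1 - a)"

end

theory Submission imports Defs begin

lemma sum4: "(\<Sum>k<4. f k) = f 0 + f 1 + f 2 + (f (3::nat)::'a::comm_monoid_add)"
  by (simp add: eval_nat_numeral)

lemma qop_eq: "(A::qop) = B \<longleftrightarrow> A$1$1 = B$1$1 \<and> A$1$2 = B$1$2 \<and> A$2$1 = B$2$1 \<and> A$2$2 = B$2$2"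
  by (auto simp: vec_eq_iff forall_2)

lemmas mm = matrix_matrix_mult_def sum_2 pauli_def mat_def cadj_def

definition ptab :: "nat \<Rightarrow> nat \<Rightarrow> nat" where
  "ptab i j = (if i = 0 then j else if j = 0 then i else if i = j then 0 else 6 - i - j)"

lemma conj_tab: "i < 4 \<Longrightarrow> j < 4 \<Longrightarrow>
   (pauli j ** pauli i) ** \<rho> ** cadj (pauli j ** pauli i) = pauli (ptab i j) ** \<rho> ** pauli (ptab i j)"
  apply (simp add: less_Suc_eq eval_nat_numeral)
  apply (elim disjE; simp add: qop_eq mm ptab_def algebra_simps)
  done

lemma commute_tab: "i < 4 \<Longrightarrow> j < 4 \<Longrightarrow> pauli_commute i j = (i = 0 \<or> j = 0 \<or> i = j)"
  unfolding pauli_commute_def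
  apply (simp add: less_Suc_eq eval_nat_numeral)
  apply (elim disjE; simp add: qop_eq mm)
  done

lemma scale_conj: "((c::real) *\<^sub>R M) ** \<rho> ** cadj (c *\<^sub>R M) = (c * c) *\<^sub>R (M ** \<rho> ** cadj M)"
  apply (simp add: qop_eq matrix_matrix_mult_def sum_2 cadj_def)
  apply (simp add: scaleR_conv_of_real algebra_simps)
  done

lemma branch_eq:
  assumes p: "\<forall>k<4. 0 \<le> p k" and q: "\<forall>k<4. 0 \<le> q k"
  shows "switch_branch b p q \<rho> = (\<Sum>i<4. \<Sum>j<4. if (i = 0 \<or> j = 0 \<or> i = j) = b then
        (p i * q j) *\<^sub>R (pauli (ptab i j) ** \<rho> ** pauli (ptab i j)) else 0)"
  unfolding switch_branch_def Let_def
proof (intro sum.cong refl)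
  fix i j assume i: "i \<in> {..<4::nat}" and j: "j \<in> {..<4::nat}"
  have "sqrt (p i) * sqrt (q j) * (sqrt (p i) * sqrt (q j)) = p i * q j"
    using p q i j by (simp add: real_sqrt_mult[symmetric])
  then show "(if pauli_commute i j = b
          then (sqrt (p i) * sqrt (q j)) *\<^sub>R (pauli j ** pauli i) ** \<rho> **
               cadj ((sqrt (p i) * sqrt (q j)) *\<^sub>R (pauli j ** pauli i))
          else 0) =
         (if (i = 0 \<or> j = 0 \<or> i = j) = b then (p i * q j) *\<^sub>R (pauli (ptab i j) ** \<rho> ** pauli (ptab i j)) else 0)"
    using i j by (simp add: commute_tab conj_tab scale_conj)
qed

definition Aplus :: "(nat \<Rightarrow> real) \<Rightarrow> (nat \<Rightarrow> real) \<Rightarrow> nat \<Rightarrow> real" where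
  "Aplus p q k = (if k = 0 then p 0 * q 0 + p 1 * q 1 + p 2 * q 2 + p 3 * q 3
     else if k = 1 then p 0 * q 1 + p 1 * q 0 else if k = 2 then p 0 * q 2 + p 2 * q 0
     else if k = 3 then p 0 * q 3 + p 3 * q 0 else 0)"

definition Aminus :: "(nat \<Rightarrow> real) \<Rightarrow> (nat \<Rightarrow> real) \<Rightarrow> nat \<Rightarrow> real" where
  "Aminus p q k = (if k = 0 then 0
     else if k = 1 then p 2 * q 3 + p 3 * q 2 else if k = 2 then p 3 * q 1 + p 1 * q 3
     else if k = 3 then p 1 * q 2 + p 2 * q 1 else 0)"

lemma branch_plus:
  assumes p: "\<forall>k<4. 0 \<le> p k" and q: "\<forall>k<4. 0 \<le> q k"
  shows "switch_branch True p q \<rho> = pauli_channel (Aplus p q) \<rho>"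
  unfolding branch_eq[OF p q] pauli_channel_def sum4 Aplus_def
  by (simp add: ptab_def scaleR_add_left algebra_simps)

lemma branch_minus:
  assumes p: "\<forall>k<4. 0 \<le> p k" and q: "\<forall>k<4. 0 \<le> q k"
  shows "switch_branch False p q \<rho> = pauli_channel (Aminus p q) \<rho>"
  unfolding branch_eq[OF p q] pauli_channel_def sum4 Aminus_def
  by (simp add: ptab_def scaleR_add_left algebra_simps)

lemma scaled_plogp:
  assumes "0 \<le> x" "0 < a"
  shows "a * plogp (x / a) = plogp x - x * log 2 a"
  using assms by (auto simp: plogp_def log_divide field_simps)

lemma branch_term:
  fixes A :: "nat \<Rightarrow> real"
  assumes A: "\<forall>k<4. 0 \<le> A k" and s: "(\<Sum>k<4. A k) = a"
  shows "(if a = 0 then 0 else a * (2 + (\<Sum>k<4. plogp (A k / a)))) = 2*a + (\<Sum>k<4. plogp (A k)) - plogp a"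
proof (cases "a = 0")
  case True
  then have "\<forall>k\<in>{..<4}. A k = 0" using A s by (subst sum_nonneg_eq_0_iff[symmetric]) auto
  then show ?thesis using True by (simp add: plogp_def)
next
  case False
  then have ap: "a > 0" using A s by (metis lessThan_iff order_le_less sum_nonneg)
  have "a * (\<Sum>k<4. plogp (A k / a)) = (\<Sum>k<4. plogp (A k) - A k * log 2 a)"
    unfolding sum_distrib_left using A ap by (intro sum.cong) (auto simp: scaled_plogp)
  also have "\<dots> = (\<Sum>k<4. plogp (A k)) - a * log 2 a"
    by (simp add: sum_subtractf s[symmetric] sum_distrib_right)
  finally show ?thesis using False by (simp add: plogp_def algebra_simps)
qed

lemma pauli_coeffs_unique:
  assumes "is_pauli_coeffs r N" "is_pauli_coeffs s N" shows "r = s"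
proof -
  define E1 :: qop where "E1 = (\<chi> i j. if i = 1 \<and> j = 1 then 1 else 0)"
  define E2 :: qop where "E2 = (\<chi> i j. if i = 1 \<and> j = 2 then 1 else 0)"
  have h1: "pauli_channel r E1 = pauli_channel s E1" and h2: "pauli_channel r E2 = pauli_channel s E2"
    using assms unfolding is_pauli_coeffs_def by metis+
  have e1: "r 0 + r 3 = s 0 + s 3" "r 1 + r 2 = s 1 + s 2"
   and e2: "r 0 - r 3 = s 0 - s 3" "r 1 - r 2 = s 1 - s 2"
    using h1 h2 unfolding pauli_channel_def sum4 qop_eq E1_def E2_def
    by (simp_all add: mm; simp add: scaleR_conv_of_real complex_eq_iff)+
  show ?thesis
  proof
    fix k show "r k = s k"
    proof (cases "k < 4")
      case True
      then show ?thesis using e1 e2 by (auto simp: less_Suc_eq eval_nat_numeral)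
    next
      case False
      then show ?thesis using assms unfolding is_pauli_coeffs_def by auto
    qed
  qed
qed

lemma C_E_eq: "is_pauli_coeffs r N \<Longrightarrow> C_E N = 2 + (\<Sum>k<4. plogp (r k))"
  unfolding C_E_def Let_def
  using the_equality[of "\<lambda>r. is_pauli_coeffs r N" r] pauli_coeffs_unique by metis

lemma bp_eq:
  "branch_prob True p q = (\<Sum>k<4. Aplus p q k)" "branch_prob False p q = (\<Sum>k<4. Aminus p q k)"
  unfolding branch_prob_def
  by (simp_all add: sum4 commute_tab Aplus_def Aminus_def)

lemma channel_scale: "pauli_channel (\<lambda>k. A k / a) \<rho> = (1 / a) *\<^sub>R pauli_channel A \<rho>"
  unfolding pauli_channel_def scaleR_sum_right by (simp add: divide_inverse mult.commute)

lemma coeffs_branch: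
  fixes A :: "nat \<Rightarrow> real"
  assumes A: "\<forall>k<4. 0 \<le> A k" "\<forall>k\<ge>4. A k = 0" and s: "(\<Sum>k<4. A k) = a" and a: "a \<noteq> 0"
    and S: "\<And>\<rho>. S \<rho> = pauli_channel A \<rho>"
  shows "C_E (\<lambda>\<rho>. (1 / a) *\<^sub>R S \<rho>) = 2 + (\<Sum>k<4. plogp (A k / a))"
proof (rule C_E_eq)
  have ap: "a > 0" using A s a by (metis lessThan_iff order_le_less sum_nonneg)
  have "(\<Sum>k<4. A k / a) = 1" using s a by (simp add: sum_divide_distrib[symmetric])
  then show "is_pauli_coeffs (\<lambda>k. A k / a) (\<lambda>\<rho>. (1 / a) *\<^sub>R S \<rho>)"
    unfolding is_pauli_coeffs_def using A ap by (simp add: S channel_scale)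
qed

theorem proposition2:
  fixes p q :: "nat \<Rightarrow> real"
  assumes "\<forall>k<4. 0 \<le> p k" and "(\<Sum>k<4. p k) = 1"
      and "\<forall>k<4. 0 \<le> q k" and "(\<Sum>k<4. q k) = 1"
  shows "C_EQ p q =
    (let A0 = p 0 * q 0 + p 1 * q 1 + p 2 * q 2 + p 3 * q 3;
         A1p = p 0 * q 1 + p 1 * q 0; A2p = p 0 * q 2 + p 2 * q 0; A3p = p 0 * q 3 + p 3 * q 0;
         A1m = p 2 * q 3 + p 3 * q 2; A2m = p 3 * q 1 + p 1 * q 3; A3m = p 1 * q 2 + p 2 * q 1;
         \<alpha> = A0 + A1p + A2p + A3p
     in 2 + bin_entropy \<alpha> + plogp A0 + plogp A1p + plogp A2p + plogp A3p
          + plogp A1m + plogp A2m + plogp A3m)"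
proof -
  note p = assms(1) and q = assms(3)
  define a where "a = branch_prob True p q"
  define b where "b = branch_prob False p q"
  have Ap: "\<forall>k<4. 0 \<le> Aplus p q k" "\<forall>k\<ge>4. Aplus p q k = 0"
    using p q by (auto simp: Aplus_def less_Suc_eq eval_nat_numeral)
  have Am: "\<forall>k<4. 0 \<le> Aminus p q k" "\<forall>k\<ge>4. Aminus p q k = 0"
    using p q by (auto simp: Aminus_def less_Suc_eq eval_nat_numeral)
  have sa: "(\<Sum>k<4. Aplus p q k) = a" and sb: "(\<Sum>k<4. Aminus p q k) = b"
    using bp_eq a_def b_def by auto
  have "a + b = (\<Sum>k<4. p k) * (\<Sum>k<4. q k)"
    unfolding sa[symmetric] sb[symmetric] by (simp add: sum4 Aplus_def Aminus_def algebra_simps)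
  then have ab: "b = 1 - a" using assms(2,4) by simp
  have T1: "(if a = 0 then 0 else a * C_E (\<lambda>\<rho>. (1 / a) *\<^sub>R switch_branch True p q \<rho>))
      = 2*a + (\<Sum>k<4. plogp (Aplus p q k)) - plogp a"
  proof -
    have "(if a = 0 then 0 else a * C_E (\<lambda>\<rho>. (1 / a) *\<^sub>R switch_branch True p q \<rho>))
       = (if a = 0 then 0 else a * (2 + (\<Sum>k<4. plogp (Aplus p q k / a))))"
      using coeffs_branch[OF Ap sa _ branch_plus[OF p q]] by auto
    then show ?thesis using branch_term[OF Ap(1) sa] by simp
  qed
  have T2: "(if b = 0 then 0 else b * C_E (\<lambda>\<rho>. (1 / b) *\<^sub>R switch_branch False p q \<rho>))
      = 2*b + (\<Sum>k<4. plogp (Aminus p q k)) - plogp b"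
  proof -
    have "(if b = 0 then 0 else b * C_E (\<lambda>\<rho>. (1 / b) *\<^sub>R switch_branch False p q \<rho>))
       = (if b = 0 then 0 else b * (2 + (\<Sum>k<4. plogp (Aminus p q k / b))))"
      using coeffs_branch[OF Am sb _ branch_minus[OF p q]] by auto
    then show ?thesis using branch_term[OF Am(1) sb] by simp
  qed
  have "C_EQ p q = 2*a + (\<Sum>k<4. plogp (Aplus p q k)) - plogp a
      + (2*b + (\<Sum>k<4. plogp (Aminus p q k)) - plogp b)"
  proof -
    have "C_EQ p q = (if a = 0 then 0 else a * C_E (\<lambda>\<rho>. (1 / a) *\<^sub>R switch_branch True p q \<rho>))
       + (if b = 0 then 0 else b * C_E (\<lambda>\<rho>. (1 / b) *\<^sub>R switch_branch False p q \<rho>))"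
      unfolding C_EQ_def a_def b_def by simp
    then show ?thesis using T1 T2 by simp
  qed
  moreover have "a = p 0 * q 0 + p 1 * q 1 + p 2 * q 2 + p 3 * q 3 + (p 0 * q 1 + p 1 * q 0)
      + (p 0 * q 2 + p 2 * q 0) + (p 0 * q 3 + p 3 * q 0)"
    using sa by (simp add: sum4 Aplus_def)
  ultimately show ?thesis
    unfolding Let_def bin_entropy_def using ab
    by (simp add: sum4 Aplus_def Aminus_def plogp_def)
qed

end
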